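(* Let $n\ge1$, $\gamma>1$, $\rho\in(0,1/n)$, $\theta>1$, $t\in[0,n]$, $\vartheta\in(0,1)$, and let $h:[0,1]\to[1,\infty)$ be differentiable, increasing and concave with $h(0)=1$, $h(1)=\bar h>1$; assume $n\frac{\gamma-1}{\gamma}<1$, $\bar h^{1/\gamma}>\frac1{1-n\rho}$ and $\frac{h'(x)}{\gamma h(x)}>\frac{n\rho}{1-n\rho x}$ for all $x\in[0,1]$. Let $\tau_1=\frac{h'(0)}{\gamma}-\rho$ and $\tau_2=\big[1+\big(\frac{h'(1)}{\gamma\bar h}-\frac{\rho}{1-n\rho}\big)^{-1}\big]^{-1}$, and in the region $\tau_2(1-\vartheta)<\theta\frac tn<\tau_1(1-\vartheta)$ let $\hat x\in(0,1)$ be the solution of $$\Big(\frac{h'(x)}{\gamma h(x)}-\frac{\rho}{1-n\rho x}\Big)\Big(1-\vartheta-\theta\frac{t}{n}x\Big)=\theta\frac{t}{n}.$$ Then (1) $\hat x$ is decreasing in $\vartheta$, $\theta$, $t$ and $\rho$; (2) for every $n\ge3$, $\hat x$ is increasing in $n$.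
   Context: $\hat x$ is the symmetric interior equilibrium amount of adulterant chosen by sellers on an e-commerce platform under preemptive economically motivated adulteration; $\vartheta$ is the platform's take rate, $\theta$ the penalty intensity, $t$ the number of randomly inspected sellers out of $n$ sellers, $\rho$ consumers' quality consciousness, $\gamma$ price sensitivity, $h$ the quality improvement from adulteration. *)

theory Defs
  imports "HOL-Analysis.Analysis"
begin

text \<open>Thresholds tau_1 and tau_2 of the paper (dh stands for the derivative h').\<close>
definition tau1 :: "(real \<Rightarrow> real) \<Rightarrow> real \<Rightarrow> real \<Rightarrow> real" where
  "tau1 dh \<gamma> \<rho> = dh 0 / \<gamma> - \<rho>"

definition tau2 :: "(real \<Rightarrow> real) \<Rightarrow> (real \<Rightarrow> real) \<Rightarrow> real \<Rightarrow> real \<Rightarrow> nat \<Rightarrow> real" where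
  "tau2 h dh \<gamma> \<rho> n =
     inverse (1 + inverse (dh 1 / (\<gamma> * h 1) - \<rho> / (1 - real n * \<rho>)))"

definition std_assms ::
  "(real \<Rightarrow> real) \<Rightarrow> (real \<Rightarrow> real) \<Rightarrow> real \<Rightarrow> real \<Rightarrow> real \<Rightarrow> real \<Rightarrow> real \<Rightarrow> nat \<Rightarrow> bool" where
  "std_assms h dh \<gamma> \<rho> \<theta> t vt n \<longleftrightarrow>
     n \<ge> 1 \<and> \<gamma> > 1 \<and> 0 < \<rho> \<and> \<rho> < 1 / real n \<and> \<theta> > 1 \<and>
     0 \<le> t \<and> t \<le> real n \<and> 0 < vt \<and> vt < 1 \<and>
     (\<forall>x\<in>{0..1}. (h has_real_derivative dh x) (at x within {0..1})) \<and>
     mono_on {0..1} h \<and> concave_on {0..1} h \<and> (\<forall>x\<in>{0..1}. 1 \<le> h x) \<and>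
     h 0 = 1 \<and> h 1 > 1 \<and>
     real n * ((\<gamma> - 1) / \<gamma>) < 1 \<and>
     h 1 powr (1 / \<gamma>) > 1 / (1 - real n * \<rho>) \<and>
     (\<forall>x\<in>{0..1}. dh x / (\<gamma> * h x) > real n * \<rho> / (1 - real n * \<rho> * x)) \<and>
     tau2 h dh \<gamma> \<rho> n * (1 - vt) < \<theta> * (t / real n) \<and>
     \<theta> * (t / real n) < tau1 dh \<gamma> \<rho> * (1 - vt)"

definition is_xhat ::
  "(real \<Rightarrow> real) \<Rightarrow> (real \<Rightarrow> real) \<Rightarrow> real \<Rightarrow> real \<Rightarrow> real \<Rightarrow> real \<Rightarrow> real \<Rightarrow> nat \<Rightarrow> real \<Rightarrow> bool" where
  "is_xhat h dh \<gamma> \<rho> \<theta> t vt n x \<longleftrightarrow>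
     0 < x \<and> x < 1 \<and>
     (dh x / (\<gamma> * h x) - \<rho> / (1 - real n * \<rho> * x)) * (1 - vt - \<theta> * (t / real n) * x)
       = \<theta> * (t / real n)"

end

theory Submission imports Defs begin

lemma tangent:
  assumes cc: "concave_on {0..1} h" and d: "\<forall>x\<in>{0..1}. (h has_real_derivative dh x) (at x within {0..1})"
    and c: "0 < c" "c < 1" and y: "0 \<le> y" "y \<le> 1"
  shows "h y - h c \<le> dh c * (y - c)"
proof -
  have cv: "convex_on {0..1::real} (\<lambda>x. - h x)" using cc by (simp add: concave_on_def)
  have "((\<lambda>x. - h x) has_field_derivative - dh c) (at c within {0..1})"
    using d c by (intro DERIV_minus) auto
  moreover have "c \<in> interior {0..1::real}" using c by simp
  ultimately have "(- h y) - (- h c) \<ge> (- dh c) * (y - c)"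
    using y by (intro convex_on_imp_above_tangent[OF cv]) (auto simp: connected_Icc)
  thus ?thesis by (simp add: algebra_simps)
qed

lemma dh_mono:
  assumes cc: "concave_on {0..1} h" and d: "\<forall>x\<in>{0..1}. (h has_real_derivative dh x) (at x within {0..1})"
    and xy: "0 < x" "x \<le> y" "y < 1"
  shows "dh y \<le> dh x"
proof -
  have 1: "h y - h x \<le> dh x * (y - x)" using tangent[OF cc d] xy by auto
  have 2: "h x - h y \<le> dh y * (x - y)" using tangent[OF cc d] xy by auto
  have "0 \<le> (y - x) * (dh x - dh y)" using 1 2 by (simp add: algebra_simps)
  show ?thesis
  proof (cases "x = y")
    case False
    with xy have "y - x > 0" by simp
    with \<open>0 \<le> (y - x) * (dh x - dh y)\<close> show ?thesis
      by (simp add: zero_le_mult_iff)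
  qed simp
qed

definition Aq :: "(real \<Rightarrow> real) \<Rightarrow> (real \<Rightarrow> real) \<Rightarrow> real \<Rightarrow> real \<Rightarrow> real \<Rightarrow> real \<Rightarrow> real" where
  "Aq h dh \<gamma> \<rho> m x = dh x / (\<gamma> * h x) - \<rho> / (1 - m * \<rho> * x)"

lemma basics:
  assumes S: "std_assms h dh \<gamma> \<rho> \<theta> t vt n" and x: "0 \<le> x" "x \<le> 1"
  shows "0 < 1 - real n * \<rho> * x" "h x \<ge> 1" "dh x > 0"
    "dh x / (\<gamma> * h x) > real n * \<rho> / (1 - real n * \<rho> * x)" "Aq h dh \<gamma> \<rho> (real n) x > 0"
proof -
  have n: "real n \<ge> 1" "\<rho> > 0" "\<rho> * real n < 1" "\<gamma> > 1" using S unfolding std_assms_def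
    by (auto simp: field_simps)
  have "real n * \<rho> * x \<le> real n * \<rho> * 1" using x n by (intro mult_left_mono) auto
  hence "real n * \<rho> * x \<le> real n * \<rho>" by (simp only: mult_1_right)
  moreover have "real n * \<rho> < 1" using n by (simp add: mult.commute)
  ultimately show 1: "0 < 1 - real n * \<rho> * x" by linarith
  show 2: "h x \<ge> 1" using S x unfolding std_assms_def by auto
  show 3: "dh x / (\<gamma> * h x) > real n * \<rho> / (1 - real n * \<rho> * x)" using S x unfolding std_assms_def by auto
  have "real n * \<rho> / (1 - real n * \<rho> * x) > 0" using 1 n by simp
  with 3 have "dh x / (\<gamma> * h x) > 0" by linarith
  moreover have "\<gamma> * h x > 0" using 2 n by simp
  ultimately show "dh x > 0" by (simp add: zero_less_divide_iff)
  have "\<rho> / (1 - real n * \<rho> * x) \<le> real n * \<rho> / (1 - real n * \<rho> * x)"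
    using 1 n by (intro divide_right_mono) auto
  thus "Aq h dh \<gamma> \<rho> (real n) x > 0" using 3 unfolding Aq_def by linarith
qed

lemma g_mono:
  assumes S: "std_assms h dh \<gamma> \<rho> \<theta> t vt n" and xy: "0 < x" "x \<le> y" "y < 1"
  shows "dh y / (\<gamma> * h y) \<le> dh x / (\<gamma> * h x)"
proof -
  have cc: "concave_on {0..1} h" and d: "\<forall>x\<in>{0..1}. (h has_real_derivative dh x) (at x within {0..1})"
    and m: "mono_on {0..1} h" and g: "\<gamma> > 1"
    using S unfolding std_assms_def by auto
  have 1: "dh y \<le> dh x" using dh_mono[OF cc d xy] .
  have 2: "h x \<le> h y" using m xy by (auto intro: mono_onD)
  have hx: "h x \<ge> 1" and dy: "dh y > 0" using basics[OF S] xy by auto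
  have "dh y / (\<gamma> * h y) \<le> dh y / (\<gamma> * h x)"
    using 2 hx dy g by (intro divide_left_mono) auto
  also have "\<dots> \<le> dh x / (\<gamma> * h x)" using 1 hx g by (intro divide_right_mono) auto
  finally show ?thesis .
qed

lemma frac_mono:
  assumes "(\<rho>::real) > 0" "0 < 1 - m * \<rho> * y" "m \<ge> 0" "x \<le> y" "0 \<le> x"
  shows "\<rho> / (1 - m * \<rho> * x) \<le> \<rho> / (1 - m * \<rho> * y)"
proof -
  have "m * \<rho> * x \<le> m * \<rho> * y" using assms by (simp add: mult_left_mono)
  hence "1 - m * \<rho> * y \<le> 1 - m * \<rho> * x" by simp
  moreover have "0 < (1 - m * \<rho> * x) * (1 - m * \<rho> * y)" using assms calculation by simp
  ultimately show ?thesis using assms by (intro divide_left_mono) auto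
qed

lemma A_mono:
  assumes S: "std_assms h dh \<gamma> \<rho> \<theta> t vt n" and xy: "0 < x" "x \<le> y" "y < 1"
  shows "Aq h dh \<gamma> \<rho> (real n) y \<le> Aq h dh \<gamma> \<rho> (real n) x"
proof -
  have "\<rho> > 0" using S unfolding std_assms_def by auto
  hence "\<rho> / (1 - real n * \<rho> * x) \<le> \<rho> / (1 - real n * \<rho> * y)"
    using basics(1)[OF S, of y] xy by (intro frac_mono) auto
  thus ?thesis using g_mono[OF S xy] unfolding Aq_def by linarith
qed

lemma invA_mono:
  assumes S: "std_assms h dh \<gamma> \<rho> \<theta> t vt n" and xy: "0 < x" "x \<le> y" "y < 1"
  shows "1 / Aq h dh \<gamma> \<rho> (real n) x \<le> 1 / Aq h dh \<gamma> \<rho> (real n) y"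
  using A_mono[OF S xy] basics(5)[OF S, of y] xy by (intro divide_left_mono) auto

lemma key:
  assumes S: "std_assms h dh \<gamma> \<rho> \<theta> t vt n" and X: "is_xhat h dh \<gamma> \<rho> \<theta> t vt n x"
  shows "\<theta> * (t / real n) > 0"
    "(1 - vt) / (\<theta> * (t / real n)) = 1 / Aq h dh \<gamma> \<rho> (real n) x + x"
proof -
  have x: "0 < x" "x < 1" using X unfolding is_xhat_def by auto
  have a: "dh 1 / (\<gamma> * h 1) - \<rho> / (1 - real n * \<rho>) > 0" using basics(5)[OF S, of 1] unfolding Aq_def by simp
  hence "inverse (dh 1 / (\<gamma> * h 1) - \<rho> / (1 - real n * \<rho>)) > 0" by simp
  hence "tau2 h dh \<gamma> \<rho> n > 0" unfolding tau2_def by (smt (verit) positive_imp_inverse_positive)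
  moreover have "1 - vt > 0" using S unfolding std_assms_def by auto
  ultimately show sp: "\<theta> * (t / real n) > 0" using S unfolding std_assms_def
    by (smt (verit) mult_pos_pos)
  define s where "s = \<theta> * (t / real n)"
  define A where "A = Aq h dh \<gamma> \<rho> (real n) x"
  have Ap: "A > 0" unfolding A_def using basics(5)[OF S] x by auto
  have "A * (1 - vt - s * x) = s" using X unfolding is_xhat_def A_def Aq_def s_def by simp
  hence "A * (1 - vt) = s * (1 + A * x)" by (simp add: algebra_simps)
  moreover have sp': "s > 0" using sp s_def by simp
  ultimately have "(1 - vt) / s = (1 + A * x) / A" using Ap by (simp add: frac_eq_eq algebra_simps)
  also have "\<dots> = 1 / A + x" using Ap by (simp add: field_simps)
  finally show "(1 - vt) / (\<theta> * (t / real n)) = 1 / Aq h dh \<gamma> \<rho> (real n) x + x"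
    unfolding s_def A_def .
qed

lemma core_ineq:
  fixes m \<rho> x w B :: real
  assumes m: "m \<ge> 3" and r: "\<rho> > 0" and x: "x > 0" and B: "B = 1 - m * \<rho> * x" "B > 0"
    and u: "m * (\<rho> * x) < 1" and w: "w > 0" "w * (m - 1) * \<rho> < B"
  shows "m * \<rho>^2 * x * w^2 < B^2 * (w + x)"
proof -
  define u where "u = \<rho> * x"
  have up: "u > 0" using r x u_def by simp
  have s1: "(m - 1) * (m * \<rho>^2 * x * w^2) < (m * \<rho> * x * w) * B"
  proof -
    have "(m * \<rho> * x * w) * (w * (m - 1) * \<rho>) < (m * \<rho> * x * w) * B"
      using w m r x by (intro mult_strict_left_mono) auto
    thus ?thesis by (simp add: power2_eq_square algebra_simps)
  qed
  have s2: "m * \<rho> * x * w \<le> (m - 1) * B * (w + x)"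
  proof -
    have eq: "(m - 1) * B * (w + x) - m * \<rho> * x * w = (m - 1) * B * x - (m*m*u - m + 1) * w"
      unfolding u_def B by (simp add: algebra_simps)
    show ?thesis
    proof (cases "m*m*u - m + 1 \<le> 0")
      case True
      have "(m - 1) * B * x \<ge> 0" using m B x by simp
      moreover have "(m*m*u - m + 1) * w \<le> 0" using True w by (simp add: mult_nonpos_nonneg)
      ultimately show ?thesis using eq by linarith
    next
      case False
      have "(m*m*u - m + 1) * (w * (m - 1) * \<rho>) \<le> (m*m*u - m + 1) * B"
        using False w by (intro mult_left_mono) auto
      moreover have "(m*m*u - m + 1) \<le> (m - 1) * (m - 1) * u"
      proof -
        have "m * u < 1" using u u_def by simp
        hence "(2*m - 1) * (m * u) \<le> (2*m - 1) * 1" using m by (intro mult_left_mono) auto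
        moreover have "(2*m - 1) \<le> m * (m - 1)" proof -
          have "m * 3 \<le> m * m" using m by (intro mult_left_mono) auto
          thus ?thesis by (simp add: algebra_simps)
        qed
        hence "(2*m - 1) * 1 \<le> m * (m - 1)" by simp
        ultimately have "(2*m - 1) * u * m \<le> (m - 1) * m" by (simp add: algebra_simps)
        hence "(2*m - 1) * u \<le> m - 1" using m by simp
        thus ?thesis by (simp add: algebra_simps)
      qed
      hence "(m*m*u - m + 1) * B \<le> (m - 1) * (m - 1) * u * B" using B by (intro mult_right_mono) auto
      ultimately have "(m*m*u - m + 1) * w * ((m - 1) * \<rho>) \<le> (m - 1) * B * x * ((m - 1) * \<rho>)"
        unfolding u_def by (simp add: algebra_simps)
      hence "(m*m*u - m + 1) * w \<le> (m - 1) * B * x" using m r by (simp add: mult_ac)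
      thus ?thesis using eq by linarith
    qed
  qed
  have "(m - 1) * (m * \<rho>^2 * x * w^2) < (m - 1) * (B^2 * (w + x))"
  proof -
    have "(m * \<rho> * x * w) * B \<le> ((m - 1) * B * (w + x)) * B" using s2 B by (intro mult_right_mono) auto
    with s1 show ?thesis by (simp add: power2_eq_square algebra_simps)
  qed
  thus ?thesis using m by simp
qed

lemma alg_eq:
  fixes B D m \<rho> x :: real
  assumes "B \<noteq> 0" "D \<noteq> 0" "m \<noteq> 0"
  shows "(\<rho> * (\<rho> * x) * m / (B * B * (D * D)) - (1 / D + x)) / (m * m) =
    \<rho>^2 * x * (1 / D)^2 / (B^2 * m) - (1 / D + x) / m^2"
  using assms by (simp add: field_simps power2_eq_square)

lemma n_dec:
  fixes G \<rho> x m1 m2 :: real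
  assumes G: "G > m2 * \<rho> / (1 - m2 * \<rho> * x)" and r: "\<rho> > 0" and x: "0 < x" "x < 1"
    and m2: "m2 * \<rho> < 1" and m1: "3 \<le> m1" "m1 < m2"
  shows "(1 / (G - \<rho> / (1 - m2 * \<rho> * x)) + x) / m2 < (1 / (G - \<rho> / (1 - m1 * \<rho> * x)) + x) / m1"
proof -
  define f where "f = (\<lambda>m::real. (1 / (G - \<rho> / (1 - m * \<rho> * x)) + x) / m)"
  have "f m2 < f m1"
  proof (rule DERIV_neg_imp_decreasing[OF m1(2)])
    fix m assume mm: "m1 \<le> m" "m \<le> m2"
    define B where "B = 1 - m * \<rho> * x"
    define D where "D = G - \<rho> / B"
    have m3: "m \<ge> 3" using mm m1 by simp
    have "m * \<rho> * x \<le> m2 * \<rho> * x" using mm r x by (intro mult_right_mono) auto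
    moreover have "m2 * \<rho> * x < m2 * \<rho> * 1" using x m2 m1 r by (intro mult_strict_left_mono) auto
    ultimately have Bp: "B > 0" and B2: "1 - m2 * \<rho> * x \<le> B" using m2 unfolding B_def by auto
    have u: "m * (\<rho> * x) < 1" using Bp unfolding B_def by (simp add: mult_ac)
    have B2p: "1 - m2 * \<rho> * x > 0" using \<open>m2 * \<rho> * x < m2 * \<rho> * 1\<close> m2 by simp
    have "m * \<rho> / B \<le> m2 * \<rho> / B" using mm r Bp by (intro divide_right_mono mult_right_mono) auto
    also have "\<dots> \<le> m2 * \<rho> / (1 - m2 * \<rho> * x)" using B2 B2p m1 r by (intro divide_left_mono) auto
    finally have GB: "G > m * \<rho> / B" using G by linarith
    have "m * \<rho> / B - \<rho> / B = (m - 1) * \<rho> / B" by (simp add: diff_divide_distrib algebra_simps)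
    hence Dgt: "D > (m - 1) * \<rho> / B" using GB unfolding D_def by linarith
    have Dp: "D > 0" using Dgt m3 r Bp by (smt (verit) divide_pos_pos mult_pos_pos)
    define w where "w = 1 / D"
    have wp: "w > 0" using Dp w_def by simp
    have "(m - 1) * \<rho> < D * B" using Dgt Bp by (simp add: pos_divide_less_eq)
    hence wB: "w * (m - 1) * \<rho> < B" unfolding w_def using Dp by (simp add: field_simps)
    have core: "m * \<rho>^2 * x * w^2 < B^2 * (w + x)"
      using core_ineq[OF m3 r x(1) B_def Bp u wp wB] .
    define E where "E = (\<rho>^2 * x * w^2 / B^2) / m - (w + x) / m^2"
    have "(f has_real_derivative E) (at m)"
      unfolding f_def E_def w_def D_def B_def
      using Bp Dp m3 unfolding B_def D_def
      by (auto intro!: derivative_eq_intros alg_eq)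
    moreover have "E < 0"
    proof -
      have "m^2 * B^2 * E = m * \<rho>^2 * x * w^2 - B^2 * (w + x)"
        unfolding E_def using m3 Bp by (simp add: field_simps power2_eq_square)
      hence "m^2 * B^2 * E < 0" using core by simp
      moreover have "m^2 * B^2 > 0" using m3 Bp by simp
      ultimately show ?thesis by (simp add: mult_less_0_iff)
    qed
    ultimately show "\<exists>y. (f has_real_derivative y) (at m) \<and> y < 0" by blast
  qed
  thus ?thesis unfolding f_def .
qed

lemma sdiv:
  assumes S: "std_assms h dh \<gamma> \<rho> \<theta> t vt n" and X: "is_xhat h dh \<gamma> \<rho> \<theta> t vt n x"
  shows "(1 - vt) / (\<theta> * (t / real n)) = real n * ((1 - vt) / (\<theta> * t))"
proof -
  have "real n > 0" using S unfolding std_assms_def by auto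
  thus ?thesis by (simp add: field_simps)
qed

lemma xin: "is_xhat h dh \<gamma> \<rho> \<theta> t vt n x \<Longrightarrow> 0 < x \<and> x < 1"
  unfolding is_xhat_def by auto

theorem proposition2:
  fixes h dh :: "real \<Rightarrow> real" and \<gamma> :: real
  shows
  "(\<forall>\<rho> \<theta> t vt1 vt2 n x1 x2.
      std_assms h dh \<gamma> \<rho> \<theta> t vt1 n \<and> std_assms h dh \<gamma> \<rho> \<theta> t vt2 n \<and>
      is_xhat h dh \<gamma> \<rho> \<theta> t vt1 n x1 \<and> is_xhat h dh \<gamma> \<rho> \<theta> t vt2 n x2 \<and>
      vt1 < vt2 \<longrightarrow> x2 < x1) \<and>
   (\<forall>\<rho> \<theta>1 \<theta>2 t vt n x1 x2.
      std_assms h dh \<gamma> \<rho> \<theta>1 t vt n \<and> std_assms h dh \<gamma> \<rho> \<theta>2 t vt n \<and>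
      is_xhat h dh \<gamma> \<rho> \<theta>1 t vt n x1 \<and> is_xhat h dh \<gamma> \<rho> \<theta>2 t vt n x2 \<and>
      \<theta>1 < \<theta>2 \<longrightarrow> x2 < x1) \<and>
   (\<forall>\<rho> \<theta> t1 t2 vt n x1 x2.
      std_assms h dh \<gamma> \<rho> \<theta> t1 vt n \<and> std_assms h dh \<gamma> \<rho> \<theta> t2 vt n \<and>
      is_xhat h dh \<gamma> \<rho> \<theta> t1 vt n x1 \<and> is_xhat h dh \<gamma> \<rho> \<theta> t2 vt n x2 \<and>
      t1 < t2 \<longrightarrow> x2 < x1) \<and>
   (\<forall>\<rho>1 \<rho>2 \<theta> t vt n x1 x2.
      std_assms h dh \<gamma> \<rho>1 \<theta> t vt n \<and> std_assms h dh \<gamma> \<rho>2 \<theta> t vt n \<and>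
      is_xhat h dh \<gamma> \<rho>1 \<theta> t vt n x1 \<and> is_xhat h dh \<gamma> \<rho>2 \<theta> t vt n x2 \<and>
      \<rho>1 < \<rho>2 \<longrightarrow> x2 < x1) \<and>
   (\<forall>\<rho> \<theta> t vt n1 n2 x1 x2.
      std_assms h dh \<gamma> \<rho> \<theta> t vt n1 \<and> std_assms h dh \<gamma> \<rho> \<theta> t vt n2 \<and>
      is_xhat h dh \<gamma> \<rho> \<theta> t vt n1 x1 \<and> is_xhat h dh \<gamma> \<rho> \<theta> t vt n2 x2 \<and>
      3 \<le> n1 \<and> n1 < n2 \<longrightarrow> x1 < x2)"
proof (intro conjI allI impI; elim conjE)
  fix \<rho> \<theta> t vt1 vt2 n x1 x2
  assume S1: "std_assms h dh \<gamma> \<rho> \<theta> t vt1 n" and S2: "std_assms h dh \<gamma> \<rho> \<theta> t vt2 n"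
    and X1: "is_xhat h dh \<gamma> \<rho> \<theta> t vt1 n x1" and X2: "is_xhat h dh \<gamma> \<rho> \<theta> t vt2 n x2"
    and lt: "vt1 < vt2"
  show "x2 < x1"
  proof (rule ccontr)
    assume "\<not> x2 < x1"
    hence "1 / Aq h dh \<gamma> \<rho> (real n) x1 \<le> 1 / Aq h dh \<gamma> \<rho> (real n) x2"
      using invA_mono[OF S1] xin[OF X1] xin[OF X2] by auto
    hence "(1 - vt1) / (\<theta> * (t / real n)) \<le> (1 - vt2) / (\<theta> * (t / real n))"
      using key(2)[OF S1 X1] key(2)[OF S2 X2] \<open>\<not> x2 < x1\<close> by linarith
    moreover have "(1 - vt2) / (\<theta> * (t / real n)) < (1 - vt1) / (\<theta> * (t / real n))"
      using key(1)[OF S1 X1] lt by (intro divide_strict_right_mono) auto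
    ultimately show False by linarith
  qed
next
  fix \<rho> \<theta>1 \<theta>2 t vt n x1 x2
  assume S1: "std_assms h dh \<gamma> \<rho> \<theta>1 t vt n" and S2: "std_assms h dh \<gamma> \<rho> \<theta>2 t vt n"
    and X1: "is_xhat h dh \<gamma> \<rho> \<theta>1 t vt n x1" and X2: "is_xhat h dh \<gamma> \<rho> \<theta>2 t vt n x2"
    and lt: "\<theta>1 < \<theta>2"
  show "x2 < x1"
  proof (rule ccontr)
    assume "\<not> x2 < x1"
    hence "1 / Aq h dh \<gamma> \<rho> (real n) x1 \<le> 1 / Aq h dh \<gamma> \<rho> (real n) x2"
      using invA_mono[OF S1] xin[OF X1] xin[OF X2] by auto
    hence le: "(1 - vt) / (\<theta>1 * (t / real n)) \<le> (1 - vt) / (\<theta>2 * (t / real n))"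
      using key(2)[OF S1 X1] key(2)[OF S2 X2] \<open>\<not> x2 < x1\<close> by linarith
    have p1: "\<theta>1 * (t / real n) > 0" using key(1)[OF S1 X1] .
    have th: "\<theta>1 > 0" "1 - vt > 0" using S1 unfolding std_assms_def by auto
    have tn: "t / real n > 0" using zero_less_mult_pos[OF p1 th(1)] .
    have "\<theta>1 * (t / real n) < \<theta>2 * (t / real n)" using lt tn by (rule mult_strict_right_mono)
    moreover have "0 < (\<theta>2 * (t / real n)) * (\<theta>1 * (t / real n))"
      using p1 key(1)[OF S2 X2] by (rule mult_pos_pos[rotated])
    ultimately have "(1 - vt) / (\<theta>2 * (t / real n)) < (1 - vt) / (\<theta>1 * (t / real n))"
      using th by (intro divide_strict_left_mono) auto
    with le show False by linarith
  qed
next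
  fix \<rho> \<theta> t1 t2 vt n x1 x2
  assume S1: "std_assms h dh \<gamma> \<rho> \<theta> t1 vt n" and S2: "std_assms h dh \<gamma> \<rho> \<theta> t2 vt n"
    and X1: "is_xhat h dh \<gamma> \<rho> \<theta> t1 vt n x1" and X2: "is_xhat h dh \<gamma> \<rho> \<theta> t2 vt n x2"
    and lt: "t1 < t2"
  show "x2 < x1"
  proof (rule ccontr)
    assume "\<not> x2 < x1"
    hence "1 / Aq h dh \<gamma> \<rho> (real n) x1 \<le> 1 / Aq h dh \<gamma> \<rho> (real n) x2"
      using invA_mono[OF S1] xin[OF X1] xin[OF X2] by auto
    hence le: "(1 - vt) / (\<theta> * (t1 / real n)) \<le> (1 - vt) / (\<theta> * (t2 / real n))"
      using key(2)[OF S1 X1] key(2)[OF S2 X2] \<open>\<not> x2 < x1\<close> by linarith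
    have p1: "\<theta> * (t1 / real n) > 0" using key(1)[OF S1 X1] .
    have th: "\<theta> > 0" "1 - vt > 0" "real n > 0" using S1 unfolding std_assms_def by auto
    have "t1 / real n < t2 / real n" using lt th by (simp add: divide_strict_right_mono)
    hence "\<theta> * (t1 / real n) < \<theta> * (t2 / real n)" using th by (intro mult_strict_left_mono) auto
    moreover have "0 < (\<theta> * (t2 / real n)) * (\<theta> * (t1 / real n))"
      using p1 key(1)[OF S2 X2] by (rule mult_pos_pos[rotated])
    ultimately have "(1 - vt) / (\<theta> * (t2 / real n)) < (1 - vt) / (\<theta> * (t1 / real n))"
      using th by (intro divide_strict_left_mono) auto
    with le show False by linarith
  qed
next
  fix \<rho>1 \<rho>2 \<theta> t vt n x1 x2
  assume S1: "std_assms h dh \<gamma> \<rho>1 \<theta> t vt n" and S2: "std_assms h dh \<gamma> \<rho>2 \<theta> t vt n"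
    and X1: "is_xhat h dh \<gamma> \<rho>1 \<theta> t vt n x1" and X2: "is_xhat h dh \<gamma> \<rho>2 \<theta> t vt n x2"
    and lt: "\<rho>1 < \<rho>2"
  show "x2 < x1"
  proof (rule ccontr)
    assume "\<not> x2 < x1"
    hence a: "1 / Aq h dh \<gamma> \<rho>1 (real n) x1 \<le> 1 / Aq h dh \<gamma> \<rho>1 (real n) x2"
      using invA_mono[OF S1] xin[OF X1] xin[OF X2] by auto
    have x2: "0 < x2" "x2 < 1" using xin[OF X2] by auto
    have B1: "0 < 1 - real n * \<rho>1 * x2" and B2: "0 < 1 - real n * \<rho>2 * x2"
      using basics(1)[OF S1, of x2] basics(1)[OF S2, of x2] x2 by auto
    have r1: "\<rho>1 > 0" using S1 unfolding std_assms_def by auto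
    have "real n * \<rho>1 * x2 \<le> real n * \<rho>2 * x2" using lt x2 by (intro mult_right_mono mult_left_mono) auto
    hence "1 - real n * \<rho>2 * x2 \<le> 1 - real n * \<rho>1 * x2" by simp
    hence "\<rho>1 / (1 - real n * \<rho>1 * x2) \<le> \<rho>1 / (1 - real n * \<rho>2 * x2)"
      using B1 B2 r1 by (intro divide_left_mono) auto
    also have "\<dots> < \<rho>2 / (1 - real n * \<rho>2 * x2)" using lt B2 by (intro divide_strict_right_mono)
    finally have "Aq h dh \<gamma> \<rho>2 (real n) x2 < Aq h dh \<gamma> \<rho>1 (real n) x2" unfolding Aq_def by linarith
    hence "1 / Aq h dh \<gamma> \<rho>1 (real n) x2 < 1 / Aq h dh \<gamma> \<rho>2 (real n) x2"
      using basics(5)[OF S2, of x2] x2 by (intro divide_strict_left_mono) auto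
    with a have "1 / Aq h dh \<gamma> \<rho>1 (real n) x1 + x1 < 1 / Aq h dh \<gamma> \<rho>2 (real n) x2 + x2"
      using \<open>\<not> x2 < x1\<close> by linarith
    thus False using key(2)[OF S1 X1] key(2)[OF S2 X2] by linarith
  qed
next
  fix \<rho> \<theta> t vt n1 n2 x1 x2
  assume S1: "std_assms h dh \<gamma> \<rho> \<theta> t vt n1" and S2: "std_assms h dh \<gamma> \<rho> \<theta> t vt n2"
    and X1: "is_xhat h dh \<gamma> \<rho> \<theta> t vt n1 x1" and X2: "is_xhat h dh \<gamma> \<rho> \<theta> t vt n2 x2"
    and n3: "3 \<le> n1" and lt: "n1 < n2"
  show "x1 < x2"
  proof (rule ccontr)
    assume "\<not> x1 < x2"
    define c where "c = (1 - vt) / (\<theta> * t)"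
    have x1: "0 < x1" "x1 < 1" using xin[OF X1] by auto
    have e1: "real n1 * c = 1 / Aq h dh \<gamma> \<rho> (real n1) x1 + x1"
      using key(2)[OF S1 X1] sdiv[OF S1 X1] unfolding c_def by simp
    have e2: "real n2 * c = 1 / Aq h dh \<gamma> \<rho> (real n2) x2 + x2"
      using key(2)[OF S2 X2] sdiv[OF S2 X2] unfolding c_def by simp
    have "1 / Aq h dh \<gamma> \<rho> (real n2) x2 \<le> 1 / Aq h dh \<gamma> \<rho> (real n2) x1"
      using invA_mono[OF S2] xin[OF X1] xin[OF X2] \<open>\<not> x1 < x2\<close> by auto
    hence le: "real n2 * c \<le> 1 / Aq h dh \<gamma> \<rho> (real n2) x1 + x1" using e2 \<open>\<not> x1 < x2\<close> by linarith
    have r: "\<rho> > 0" "real n2 * \<rho> < 1" "real n2 > 0" "real n1 > 0"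
      using S1 S2 unfolding std_assms_def by (auto simp: field_simps)
    have "(1 / (dh x1 / (\<gamma> * h x1) - \<rho> / (1 - real n2 * \<rho> * x1)) + x1) / real n2
        < (1 / (dh x1 / (\<gamma> * h x1) - \<rho> / (1 - real n1 * \<rho> * x1)) + x1) / real n1"
      using basics(4)[OF S2, of x1] x1 r n3 lt by (intro n_dec) auto
    hence "(1 / Aq h dh \<gamma> \<rho> (real n2) x1 + x1) / real n2
        < (1 / Aq h dh \<gamma> \<rho> (real n1) x1 + x1) / real n1" unfolding Aq_def .
    also have "\<dots> = c" using r by (simp add: e1[symmetric])
    finally have "(1 / Aq h dh \<gamma> \<rho> (real n2) x1 + x1) / real n2 < c" .
    hence "1 / Aq h dh \<gamma> \<rho> (real n2) x1 + x1 < c * real n2" using r by (simp add: pos_divide_less_eq)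
    hence "1 / Aq h dh \<gamma> \<rho> (real n2) x1 + x1 < real n2 * c" by (simp add: mult.commute)
    with le show False by linarith
  qed
qed
end
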